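(* Let $m\in\mathbb{N}$, $\varepsilon>0$ and $1<q<p$. Let $u$ be a nonnegative locally integrable function and $v\in\mathrm{RH}_\infty\cap A_q$. Then there is $C>0$ such that \[ M_{\Phi_m^\varepsilon}\left(uv^{1-p'}\right)(x)\le C\,M_{\Phi_m^\varepsilon,\,v^{1-q'}}u(x)\,v(x)^{-p'}\,\Psi(v(x)) \] for almost every $x\in\mathbb{R}^n$.
   Context: $w\in A_q$ iff $\sup_Q(\frac1{|Q|}\int_Qw)(\frac1{|Q|}\int_Qw^{1-q'})^{q-1}<\infty$ (cubes with sides parallel to the axes); $w\in\mathrm{RH}_\infty$ iff $\sup_Qw\le\frac C{|Q|}\int_Qw$ for all cubes. $\Phi_m^\varepsilon(\lambda)=\lambda(1+\log^+\lambda)^{m+\varepsilon}$. $\Psi(\lambda)=\lambda^{p'+1-q'}\mathcal{X}_{[0,1)}(\lambda)+\lambda^{p'}\mathcal{X}_{[1,\infty)}(\lambda)$. For a Young function $\varphi$ and weight $w$: $\|f\|_{\varphi,Q,w}=\inf\{\lambda>0:\frac1{w(Q)}\int_Q\varphi(|f|/\lambda)w\le1\}$, $M_{\varphi,w}f(x)=\sup_{Q\ni x}\|f\|_{\varphi,Q,w}$, and $M_\varphi=M_{\varphi,1}$. *)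

theory Defs
  imports "HOL-Analysis.Analysis"
begin

text \<open>Cubes in R^n with sides parallel to the axes (closed; boundaries are null sets).\<close>
definition is_cube :: "'a::euclidean_space set \<Rightarrow> bool" where
  "is_cube Q \<longleftrightarrow> (\<exists>a b s. s > 0 \<and> (\<forall>i\<in>Basis. b \<bullet> i = a \<bullet> i + s) \<and> Q = cbox a b)"

definition conj_exp :: "real \<Rightarrow> real" where
  "conj_exp q = q / (q - 1)"

definition locally_integrable :: "('a::euclidean_space \<Rightarrow> real) \<Rightarrow> bool" where
  "locally_integrable f \<longleftrightarrow> f \<in> borel_measurable lebesgue \<and>
     (\<forall>K. compact K \<longrightarrow> set_integrable lebesgue K f)"

definition weight :: "('a::euclidean_space \<Rightarrow> real) \<Rightarrow> bool" where
  "weight w \<longleftrightarrow> locally_integrable w \<and> (AE x in lebesgue. 0 < w x)"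

definition cube_avg :: "('a::euclidean_space \<Rightarrow> real) \<Rightarrow> 'a set \<Rightarrow> real" where
  "cube_avg f Q = (1 / measure lebesgue Q) * (LINT x:Q|lebesgue. f x)"

text \<open>Muckenhoupt class A_q (the finiteness of the supremum includes integrability
  of w^(1-q') over cubes).\<close>
definition A_class :: "real \<Rightarrow> ('a::euclidean_space \<Rightarrow> real) \<Rightarrow> bool" where
  "A_class q w \<longleftrightarrow> weight w \<and>
     (\<forall>Q. is_cube Q \<longrightarrow> set_integrable lebesgue Q (\<lambda>x. w x powr (1 - conj_exp q))) \<and>
     (\<exists>C. \<forall>Q. is_cube Q \<longrightarrow>
        cube_avg w Q * (cube_avg (\<lambda>x. w x powr (1 - conj_exp q)) Q) powr (q - 1) \<le> C)"

text \<open>Reverse Hoelder class RH_infinity (sup understood as essential sup on Q).\<close>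
definition RH_inf :: "('a::euclidean_space \<Rightarrow> real) \<Rightarrow> bool" where
  "RH_inf w \<longleftrightarrow> weight w \<and>
     (\<exists>C. \<forall>Q. is_cube Q \<longrightarrow> (AE x in lebesgue. x \<in> Q \<longrightarrow> w x \<le> C * cube_avg w Q))"

definition log_plus :: "real \<Rightarrow> real" where
  "log_plus t = max 0 (ln t)"

definition Phi :: "nat \<Rightarrow> real \<Rightarrow> real \<Rightarrow> real" where
  "Phi m \<epsilon> t = t * (1 + log_plus t) powr (real m + \<epsilon>)"

definition Psi :: "real \<Rightarrow> real \<Rightarrow> real \<Rightarrow> real" where
  "Psi p q t = (if t < 1 then t powr (conj_exp p + 1 - conj_exp q) else t powr (conj_exp p))"

text \<open>Weighted Luxemburg norm ||f||_{phi,Q,w}, valued in [0,\<infinity>] (Inf {} = \<infinity>).\<close>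
definition lux_norm :: "(real \<Rightarrow> real) \<Rightarrow> ('a::euclidean_space \<Rightarrow> real) \<Rightarrow> 'a set
     \<Rightarrow> ('a \<Rightarrow> real) \<Rightarrow> ennreal" where
  "lux_norm \<phi> w Q f = Inf (ennreal ` {r::real. r > 0 \<and>
      (\<integral>\<^sup>+ x. ennreal (\<phi> (\<bar>f x\<bar> / r) * w x) * indicator Q x \<partial>lebesgue)
        / (\<integral>\<^sup>+ x. ennreal (w x) * indicator Q x \<partial>lebesgue) \<le> 1})"

text \<open>Weighted Orlicz maximal function M_{phi,w}; M_phi = M_{phi,1}.\<close>
definition orlicz_max :: "(real \<Rightarrow> real) \<Rightarrow> ('a::euclidean_space \<Rightarrow> real) \<Rightarrow> ('a \<Rightarrow> real)
     \<Rightarrow> 'a \<Rightarrow> ennreal" where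
  "orlicz_max \<phi> w f x = (SUP Q\<in>{Q. is_cube Q \<and> x \<in> Q}. lux_norm \<phi> w Q f)"

end

theory Submission
  imports Defs
begin

lemma cube_form:
  assumes "is_cube (Q::'a::euclidean_space set)"
  obtains a s where "s > 0" "Q = cbox a (a + s *\<^sub>R One)"
proof -
  from assms obtain a b s where s: "s>0" "\<forall>i\<in>Basis. b \<bullet> i = a \<bullet> i + s" "Q = cbox a b"
    unfolding is_cube_def by blast
  have "b = a + s *\<^sub>R One" using s(2) by (auto simp: euclidean_eq_iff[where 'a='a] inner_simps)
  thus ?thesis using that s by blast
qed

lemma cube_measure:
  assumes "(s::real) > 0"
  shows "measure lebesgue (cbox a (a + s *\<^sub>R (One::'a::euclidean_space))) = s ^ DIM('a)"
proof -
  have "measure lebesgue (cbox a (a + s *\<^sub>R (One::'a))) = Henstock_Kurzweil_Integration.content (cbox a (a + s *\<^sub>R One))"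
    by simp
  also have "\<dots> = (\<Prod>i\<in>(Basis::'a set). s)"
    using assms by (subst content_cbox) (auto simp: inner_simps)
  finally show ?thesis by simp
qed


lemma log_plus_nonneg: "0 \<le> log_plus t" by (simp add: log_plus_def)

lemma log_plus_mult:
  assumes "0 \<le> s" "0 \<le> t"
  shows "log_plus (s*t) \<le> log_plus s + log_plus t"
proof (cases "s = 0 \<or> t = 0")
  case True thus ?thesis by (auto simp: log_plus_def)
next
  case False
  hence "s > 0" "t > 0" using assms by auto
  hence "ln (s*t) = ln s + ln t" by (simp add: ln_mult)
  thus ?thesis unfolding log_plus_def by auto
qed

lemma log_plus_mono: "0 \<le> s \<Longrightarrow> s \<le> t \<Longrightarrow> log_plus s \<le> log_plus t"
proof (cases "s = 0")
  case True thus ?thesis by (simp add: log_plus_def)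
next
  case False
  assume "0 \<le> s" "s \<le> t"
  hence "ln s \<le> ln t" using False by (subst ln_le_cancel_iff) auto
  thus ?thesis unfolding log_plus_def by auto
qed

lemma Phi_nonneg: "0 \<le> t \<Longrightarrow> 0 \<le> Phi m e t"
  unfolding Phi_def by simp

lemma Phi_submult:
  assumes "0 \<le> s" "0 \<le> t" "0 \<le> e"
  shows "Phi m e (s*t) \<le> Phi m e s * Phi m e t"
proof -
  let ?k = "real m + e"
  have k: "0 \<le> ?k" using assms by simp
  have "1 + log_plus (s*t) \<le> (1 + log_plus s) * (1 + log_plus t)"
    using log_plus_mult[OF assms(1,2)] log_plus_nonneg[of s] log_plus_nonneg[of t]
  proof -
    have "(1 + log_plus s) * (1 + log_plus t) = 1 + log_plus s + log_plus t + log_plus s * log_plus t"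
      by (simp add: algebra_simps)
    moreover have "0 \<le> log_plus s * log_plus t" by (simp add: log_plus_nonneg)
    ultimately show ?thesis using log_plus_mult[OF assms(1,2)] by linarith
  qed
  hence "(1 + log_plus (s*t)) powr ?k \<le> ((1 + log_plus s) * (1 + log_plus t)) powr ?k"
    using k log_plus_nonneg[of "s*t"] by (intro powr_mono2) auto
  also have "\<dots> = (1 + log_plus s) powr ?k * (1 + log_plus t) powr ?k"
    using log_plus_nonneg[of s] log_plus_nonneg[of t] by (simp add: powr_mult)
  finally have *: "(1 + log_plus (s*t)) powr ?k \<le> (1 + log_plus s) powr ?k * (1 + log_plus t) powr ?k" .
  have "Phi m e (s*t) = (s*t) * (1 + log_plus (s*t)) powr ?k" by (simp add: Phi_def)
  also have "\<dots> \<le> (s*t) * ((1 + log_plus s) powr ?k * (1 + log_plus t) powr ?k)"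
    using * assms by (intro mult_left_mono) auto
  also have "\<dots> = Phi m e s * Phi m e t" by (simp add: Phi_def algebra_simps)
  finally show ?thesis .
qed

lemma ln_bound:
  assumes "1 \<le> (y::real)" "0 < \<eta>" "0 \<le> \<beta>"
  shows "1 + \<beta> * ln y \<le> (1 + \<beta>/\<eta>) * y powr \<eta>"
proof -
  have y0: "0 < y" using assms by linarith
  have "ln (y powr \<eta>) \<le> y powr \<eta> - 1" using y0 by (intro ln_le_minus_one) auto
  hence "\<eta> * ln y \<le> y powr \<eta>" using y0 by (simp add: ln_powr)
  hence "ln y \<le> y powr \<eta> / \<eta>" using assms(2) by (simp add: field_simps)
  hence "\<beta> * ln y \<le> \<beta> * (y powr \<eta> / \<eta>)" using assms(3) by (rule mult_left_mono)
  moreover have "1 \<le> y powr \<eta>" using assms by (simp add: ge_one_powr_ge_zero)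
  ultimately show ?thesis by (simp add: field_simps)
qed

lemma Phi_power_bound:
  assumes "0 < \<alpha>" "0 < \<delta>" "0 < k" "1 \<le> C1"
  shows "\<exists>B>0. \<forall>a. 0 < a \<and> a \<le> C1 \<longrightarrow>
      a powr \<delta> * (1 + log_plus (a powr (-\<alpha>))) powr k \<le> B"
proof -
  define \<eta> where "\<eta> = \<delta> / k"
  have eta: "0 < \<eta>" using assms by (simp add: \<eta>_def)
  define M where "M = (1 + \<alpha>/\<eta>) powr k"
  have "1 + \<alpha>/\<eta> > 0" using assms eta by (simp add: add_pos_pos)
  hence "M > 0" by (simp add: M_def)
  show ?thesis
  proof (intro exI[of _ "max (C1 powr \<delta>) M"] conjI allI impI)
    show "0 < max (C1 powr \<delta>) M" using \<open>M>0\<close> by simp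
    fix a :: real assume a: "0 < a \<and> a \<le> C1"
    show "a powr \<delta> * (1 + log_plus (a powr (-\<alpha>))) powr k \<le> max (C1 powr \<delta>) M"
    proof (cases "1 \<le> a")
      case True
      hence "a powr (-\<alpha>) \<le> 1" using assms by (simp add: powr_minus_divide ge_one_powr_ge_zero)
      have "ln a \<ge> 0" using True by simp
      hence "log_plus (a powr (-\<alpha>)) = 0" using a assms unfolding log_plus_def by (simp add: ln_powr)
      hence "a powr \<delta> * (1 + log_plus (a powr (-\<alpha>))) powr k = a powr \<delta>" by simp
      also have "\<dots> \<le> C1 powr \<delta>" using a assms by (intro powr_mono2) auto
      finally show ?thesis by simp
    next
      case False
      define y where "y = 1/a"
      have y: "1 \<le> y" using False a by (simp add: y_def)
      have "a powr (-\<alpha>) = y powr \<alpha>" using a by (simp add: y_def powr_minus_divide powr_divide)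
      moreover have "0 \<le> \<alpha> * ln y" using y assms by simp
      ultimately have "log_plus (a powr (-\<alpha>)) = \<alpha> * ln y" using y a
        unfolding log_plus_def by (simp add: ln_powr)
      hence "(1 + log_plus (a powr (-\<alpha>))) powr k \<le> ((1 + \<alpha>/\<eta>) * y powr \<eta>) powr k"
        using ln_bound[OF y eta, of \<alpha>] assms y by (intro powr_mono2) (auto)
      also have "\<dots> = M * y powr (\<eta> * k)" using assms eta
        by (simp add: M_def powr_mult powr_powr)
      also have "\<eta> * k = \<delta>" using assms by (simp add: \<eta>_def)
      finally have "a powr \<delta> * (1 + log_plus (a powr (-\<alpha>))) powr k \<le> a powr \<delta> * (M * y powr \<delta>)"
        using a by (intro mult_left_mono) auto
      also have "a powr \<delta> * (M * y powr \<delta>) = M" using a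
        by (simp add: y_def powr_divide powr_minus_divide)
      finally show ?thesis by simp
    qed
  qed
qed

lemma Phi_scalar:
  assumes "0 < \<alpha>" "0 < \<delta>" "0 < e" "1 \<le> C1" "0 < C2"
  shows "\<exists>c\<ge>1. \<forall>a. 0 < a \<and> a \<le> C1 \<longrightarrow>
      Phi m e (a powr (-\<alpha>) / c) \<le> a powr (-(\<alpha>+\<delta>)) / C2"
proof -
  have k: "0 < real m + e" using assms by simp
  obtain B where B: "B > 0" "\<And>a. 0 < a \<and> a \<le> C1 \<Longrightarrow>
      a powr \<delta> * (1 + log_plus (a powr (-\<alpha>))) powr (real m + e) \<le> B"
    using Phi_power_bound[OF assms(1,2) k assms(4)] by blast
  define c where "c = max 1 (C2 * B)"
  show ?thesis
  proof (intro exI[of _ c] conjI allI impI)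
    show "1 \<le> c" by (simp add: c_def)
    fix a :: real assume a: "0 < a \<and> a \<le> C1"
    have c1: "1 \<le> c" by (simp add: c_def)
    have "log_plus (a powr (-\<alpha>) / c) \<le> log_plus (a powr (-\<alpha>))"
    proof (rule log_plus_mono)
      show "0 \<le> a powr (-\<alpha>) / c" using c1 by simp
      have "a powr (-\<alpha>) / c \<le> a powr (-\<alpha>) / 1" using c1 by (intro divide_left_mono) auto
      thus "a powr (-\<alpha>) / c \<le> a powr (-\<alpha>)" by simp
    qed
    hence "(1 + log_plus (a powr (-\<alpha>) / c)) powr (real m + e) \<le> (1 + log_plus (a powr (-\<alpha>))) powr (real m + e)"
      using k log_plus_nonneg[of "a powr (-\<alpha>) / c"] by (intro powr_mono2) auto
    hence "Phi m e (a powr (-\<alpha>) / c) \<le> a powr (-\<alpha>) / c * (1 + log_plus (a powr (-\<alpha>))) powr (real m + e)"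
      unfolding Phi_def using c1 by (intro mult_left_mono) auto
    also have "\<dots> = (a powr \<delta> * (1 + log_plus (a powr (-\<alpha>))) powr (real m + e)) * a powr (-(\<alpha>+\<delta>)) / c"
    proof -
      have "a powr \<delta> * a powr (-(\<alpha>+\<delta>)) = a powr (-\<alpha>)" using a by (simp add: powr_add[symmetric])
      thus ?thesis by (simp add: mult_ac)
    qed
    also have "\<dots> \<le> B * a powr (-(\<alpha>+\<delta>)) / c"
      using B(2)[OF a] c1 by (intro divide_right_mono mult_right_mono) auto
    also have "\<dots> \<le> a powr (-(\<alpha>+\<delta>)) / C2"
    proof -
      have "C2 * B \<le> c" by (simp add: c_def)
      hence "B / c \<le> 1 / C2" using assms(5) c1 by (simp add: field_simps)
      thus ?thesis using mult_right_mono[OF \<open>B / c \<le> 1 / C2\<close>, of "a powr (-(\<alpha>+\<delta>))"]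
        by (simp add: field_simps)
    qed
    finally show "Phi m e (a powr (-\<alpha>) / c) \<le> a powr (-(\<alpha>+\<delta>)) / C2" .
  qed
qed


lemma Inf_mult_le_ennreal:
  fixes K :: real and Y :: "ennreal set"
  assumes "K > 0"
  shows "Inf ((\<lambda>y. ennreal K * y) ` Y) \<le> ennreal K * Inf Y"
proof -
  let ?z = "Inf ((\<lambda>y. ennreal K * y) ` Y)"
  have KK: "ennreal K * ennreal (1/K) = 1" using assms by (simp add: ennreal_mult''[symmetric])
  have "ennreal (1/K) * ?z \<le> Inf Y"
  proof (rule Inf_greatest)
    fix y assume "y \<in> Y"
    hence "?z \<le> ennreal K * y" by (intro Inf_lower) auto
    hence "ennreal (1/K) * ?z \<le> ennreal (1/K) * (ennreal K * y)" by (intro mult_left_mono) auto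
    also have "\<dots> = (ennreal K * ennreal (1/K)) * y" by (simp only: ac_simps)
    also have "\<dots> = y" using KK by simp
    finally show "ennreal (1/K) * ?z \<le> y" .
  qed
  hence "ennreal K * (ennreal (1/K) * ?z) \<le> ennreal K * Inf Y" by (intro mult_left_mono) auto
  thus ?thesis using KK by (simp add: mult.assoc[symmetric])
qed

lemma cube_estimate:
  fixes u v :: "'a::euclidean_space \<Rightarrow> real" and Q :: "'a set"
  assumes Q: "Q \<in> sets lebesgue" "0 < measure lebesgue Q" "emeasure lebesgue Q < \<infinity>"
    and u: "\<forall>x. 0 \<le> u x"
    and um[measurable]: "u \<in> borel_measurable lebesgue"
    and vm[measurable]: "v \<in> borel_measurable lebesgue"
    and vQ: "AE y in lebesgue. y \<in> Q \<longrightarrow> 0 < v y \<and> v y \<le> C1 * A"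
    and A: "0 < A"
    and wint: "set_integrable lebesgue Q (\<lambda>y. v y powr (-\<beta>))"
    and wbound: "(LINT y:Q|lebesgue. v y powr (-\<beta>)) \<le> C2 * A powr (-\<beta>) * measure lebesgue Q"
    and C2: "0 < C2"
    and e: "0 \<le> e"
    and c: "0 < c"
    and scal: "\<forall>a. 0 < a \<and> a \<le> C1 \<longrightarrow> Phi m e (a powr (-\<alpha>) / c) \<le> a powr (-\<beta>) / C2"
  shows "lux_norm (Phi m e) (\<lambda>_. 1) Q (\<lambda>y. u y * v y powr (-\<alpha>))
     \<le> ennreal (c * A powr (-\<alpha>)) * lux_norm (Phi m e) (\<lambda>y. v y powr (-\<beta>)) Q u"
proof -
  note [measurable] = Q(1)
  define K where "K = c * A powr (-\<alpha>)"
  have K: "K > 0" using c A by (simp add: K_def)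
  define w where "w = (\<lambda>y. v y powr (-\<beta>))"
  define SR where "SR = {r::real. r > 0 \<and>
      (\<integral>\<^sup>+ x. ennreal (Phi m e (\<bar>u x\<bar> / r) * w x) * indicator Q x \<partial>lebesgue)
        / (\<integral>\<^sup>+ x. ennreal (w x) * indicator Q x \<partial>lebesgue) \<le> 1}"
  define SL where "SL = {r::real. r > 0 \<and>
      (\<integral>\<^sup>+ x. ennreal (Phi m e (\<bar>u x * v x powr (-\<alpha>)\<bar> / r) * 1) * indicator Q x \<partial>lebesgue)
        / (\<integral>\<^sup>+ x. ennreal 1 * indicator Q x \<partial>lebesgue) \<le> 1}"
  have DR: "(\<integral>\<^sup>+ x. ennreal (w x) * indicator Q x \<partial>lebesgue) = ennreal (LINT y:Q|lebesgue. w y)"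
  proof -
    have "(\<integral>\<^sup>+ x. ennreal (w x) * indicator Q x \<partial>lebesgue) = (\<integral>\<^sup>+ x. ennreal (indicator Q x *\<^sub>R w x) \<partial>lebesgue)"
      by (intro nn_integral_cong) (auto simp: indicator_def)
    also have "\<dots> = ennreal (\<integral>x. indicator Q x *\<^sub>R w x \<partial>lebesgue)"
      using wint unfolding set_integrable_def w_def
      by (intro nn_integral_eq_integral) (auto simp: indicator_def)
    finally show ?thesis by (simp add: set_lebesgue_integral_def)
  qed
  have DL: "(\<integral>\<^sup>+ x. ennreal 1 * indicator Q x \<partial>lebesgue) = ennreal (measure lebesgue Q)"
  proof -
    have "(\<integral>\<^sup>+ x. ennreal 1 * indicator Q x \<partial>lebesgue) = emeasure lebesgue Q" using Q(1) by simp
    also have "\<dots> = ennreal (measure lebesgue Q)" using Q(3) by (simp add: emeasure_eq_ennreal_measure)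
    finally show ?thesis .
  qed
  have key: "K * r \<in> SL" if r: "r \<in> SR" for r
  proof -
    have r0: "r > 0" using r by (simp add: SR_def)
    have NR: "(\<integral>\<^sup>+ x. ennreal (Phi m e (\<bar>u x\<bar> / r) * w x) * indicator Q x \<partial>lebesgue)
        \<le> ennreal (LINT y:Q|lebesgue. w y)"
    proof -
      have "(\<integral>\<^sup>+ x. ennreal (Phi m e (\<bar>u x\<bar> / r) * w x) * indicator Q x \<partial>lebesgue)
        / ennreal (LINT y:Q|lebesgue. w y) \<le> 1" using r DR by (simp add: SR_def)
      thus ?thesis
      proof (cases "ennreal (LINT y:Q|lebesgue. w y) = 0")
        case True
        with \<open>_ / _ \<le> 1\<close> show ?thesis by (simp add: top_unique split: if_splits)
      next
        case False
        let ?x = "(\<integral>\<^sup>+ x. ennreal (Phi m e (\<bar>u x\<bar> / r) * w x) * indicator Q x \<partial>lebesgue)"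
        let ?y = "ennreal (LINT y:Q|lebesgue. w y)"
        have "?x = ?x / ?y * ?y" using False by (simp add: ennreal_divide_times)
        also have "\<dots> \<le> 1 * ?y" using \<open>?x / ?y \<le> 1\<close> by (intro mult_right_mono) auto
        finally show ?thesis by simp
      qed
    qed
    have pw: "AE x in lebesgue.
        ennreal (Phi m e (\<bar>u x * v x powr (-\<alpha>)\<bar> / (K*r)) * 1) * indicator Q x
        \<le> ennreal (A powr \<beta> / C2) * (ennreal (Phi m e (\<bar>u x\<bar> / r) * w x) * indicator Q x)"
      using vQ
    proof eventually_elim
      case (elim x)
      show ?case
      proof (cases "x \<in> Q")
        case False thus ?thesis by simp
      next
        case True
        with elim have vx: "0 < v x" "v x \<le> C1 * A" by auto
        define a where "a = v x / A"
        have a: "0 < a" "a \<le> C1" using vx A by (auto simp: a_def field_simps)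
        have "\<bar>u x * v x powr (-\<alpha>)\<bar> / (K*r) = (u x / r) * (a powr (-\<alpha>) / c)"
          using u A vx r0 c by (simp add: K_def a_def powr_divide abs_mult field_simps)
        hence "Phi m e (\<bar>u x * v x powr (-\<alpha>)\<bar> / (K*r)) = Phi m e ((u x / r) * (a powr (-\<alpha>) / c))"
          by (simp only:)
        also have "\<dots> \<le> Phi m e (u x / r) * Phi m e (a powr (-\<alpha>) / c)"
          using u r0 c e by (intro Phi_submult) auto
        also have "\<dots> \<le> Phi m e (u x / r) * (a powr (-\<beta>) / C2)"
          using scal a u r0 by (intro mult_left_mono Phi_nonneg) auto
        also have "a powr (-\<beta>) = w x * A powr \<beta>"
          using vx A by (simp add: a_def w_def powr_divide powr_minus field_simps)
        finally have "Phi m e (\<bar>u x * v x powr (-\<alpha>)\<bar> / (K*r)) \<le> A powr \<beta> / C2 * (Phi m e (\<bar>u x\<bar> / r) * w x)"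
          using u by (simp add: field_simps)
        moreover have "0 \<le> Phi m e (\<bar>u x\<bar> / r) * w x"
          using r0 by (simp add: w_def Phi_nonneg)
        ultimately show ?thesis using True C2
          by (simp add: ennreal_mult''[symmetric] ennreal_leI)
      qed
    qed
    have "(\<integral>\<^sup>+ x. ennreal (Phi m e (\<bar>u x * v x powr (-\<alpha>)\<bar> / (K*r)) * 1) * indicator Q x \<partial>lebesgue)
       \<le> (\<integral>\<^sup>+ x. ennreal (A powr \<beta> / C2) * (ennreal (Phi m e (\<bar>u x\<bar> / r) * w x) * indicator Q x) \<partial>lebesgue)"
      using pw by (rule nn_integral_mono_AE)
    also have "\<dots> = ennreal (A powr \<beta> / C2) * (\<integral>\<^sup>+ x. ennreal (Phi m e (\<bar>u x\<bar> / r) * w x) * indicator Q x \<partial>lebesgue)"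
      by (rule nn_integral_cmult) (unfold w_def Phi_def log_plus_def, measurable)
    also have "\<dots> \<le> ennreal (A powr \<beta> / C2) * ennreal (LINT y:Q|lebesgue. w y)"
      using NR by (intro mult_left_mono) auto
    also have "\<dots> \<le> ennreal (A powr \<beta> / C2) * ennreal (C2 * A powr (-\<beta>) * measure lebesgue Q)"
      using wbound by (intro mult_left_mono ennreal_leI) (auto simp: w_def)
    also have "\<dots> = ennreal (measure lebesgue Q)"
      using C2 A Q by (simp add: ennreal_mult''[symmetric] powr_minus field_simps)
    finally have N: "(\<integral>\<^sup>+ x. ennreal (Phi m e (\<bar>u x * v x powr (-\<alpha>)\<bar> / (K*r)) * 1) * indicator Q x \<partial>lebesgue)
       \<le> ennreal (measure lebesgue Q)" .
    have "(\<integral>\<^sup>+ x. ennreal (Phi m e (\<bar>u x * v x powr (-\<alpha>)\<bar> / (K*r)) * 1) * indicator Q x \<partial>lebesgue)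
       / ennreal (measure lebesgue Q) \<le> ennreal (measure lebesgue Q) / ennreal (measure lebesgue Q)"
      using N by (rule divide_right_mono_ennreal)
    also have "\<dots> = 1" using Q by simp
    finally show ?thesis using K r0 DL by (simp add: SL_def)
  qed
  have "lux_norm (Phi m e) (\<lambda>_. 1) Q (\<lambda>y. u y * v y powr (-\<alpha>)) = Inf (ennreal ` SL)"
    by (simp add: lux_norm_def SL_def)
  also have "\<dots> \<le> Inf ((\<lambda>y. ennreal K * y) ` (ennreal ` SR))"
  proof (rule Inf_superset_mono)
    show "(\<lambda>y. ennreal K * y) ` (ennreal ` SR) \<subseteq> ennreal ` SL"
    proof
      fix z assume "z \<in> (\<lambda>y. ennreal K * y) ` (ennreal ` SR)"
      then obtain r where r: "r \<in> SR" "z = ennreal K * ennreal r" by auto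
      hence "z = ennreal (K * r)" using K by (simp add: ennreal_mult'' SR_def)
      thus "z \<in> ennreal ` SL" using key[OF r(1)] by auto
    qed
  qed
  also have "\<dots> \<le> ennreal K * Inf (ennreal ` SR)" using K by (rule Inf_mult_le_ennreal)
  also have "Inf (ennreal ` SR) = lux_norm (Phi m e) (\<lambda>y. v y powr (-\<beta>)) Q u"
    by (simp add: lux_norm_def SR_def w_def)
  finally show ?thesis by (simp add: K_def)
qed


lemma avg_compare:
  fixes v :: "'a::euclidean_space \<Rightarrow> real"
  assumes sub: "Q \<subseteq> Q'" and QS: "Q \<in> sets lebesgue" "Q' \<in> sets lebesgue"
    and fin: "emeasure lebesgue Q' \<noteq> \<infinity>"
    and mQ: "0 < measure lebesgue Q"
    and int: "set_integrable lebesgue Q' v"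
    and bnd: "AE y in lebesgue. y \<in> Q' \<longrightarrow> v y \<le> C1 * cube_avg v Q'"
    and nonneg: "AE y in lebesgue. 0 \<le> v y"
    and C1: "0 \<le> C1"
    and ratio: "2 * C1 * (measure lebesgue Q' - measure lebesgue Q) \<le> measure lebesgue Q'"
  shows "cube_avg v Q' \<le> 2 * cube_avg v Q"
proof -
  define mQ mQ' I I' A A' where defs: "mQ = measure lebesgue Q" "mQ' = measure lebesgue Q'"
    "I = (LINT y:Q|lebesgue. v y)" "I' = (LINT y:Q'|lebesgue. v y)"
    "A = cube_avg v Q" "A' = cube_avg v Q'"
  have finQ: "emeasure lebesgue Q \<noteq> \<infinity>"
    using fin sub QS emeasure_mono[of Q Q' lebesgue] by (auto simp: top_unique)
  have mle: "mQ \<le> mQ'" using sub QS fin by (simp add: defs measure_mono_fmeasurable fmeasurable_def less_top)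
  have mQ'pos: "0 < mQ'" using mle mQ defs by simp
  have intQ: "set_integrable lebesgue Q v" using set_integrable_subset[OF int QS(1) sub] .
  have DS: "Q' - Q \<in> sets lebesgue" using QS by auto
  have intD: "set_integrable lebesgue (Q' - Q) v" using set_integrable_subset[OF int DS] by auto
  have "Q' = Q \<union> (Q' - Q)" using sub by auto
  hence "I' = I + (LINT y:Q'-Q|lebesgue. v y)"
    unfolding defs using set_integral_Un[OF _ intQ intD] by (metis Diff_disjoint)
  moreover have "(LINT y:Q'-Q|lebesgue. v y) \<le> (LINT y:Q'-Q|lebesgue. C1 * A')"
  proof (rule set_integral_mono_AE[OF intD])
    show "set_integrable lebesgue (Q' - Q) (\<lambda>y. C1 * A')"
      using DS fin emeasure_mono[of "Q'-Q" Q' lebesgue] QS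
      unfolding set_integrable_def
      by (intro integrable_scaleR_left integrable_real_indicator) (auto simp: top_unique less_top)
    show "AE y\<in>Q' - Q in lebesgue. v y \<le> C1 * A'" using bnd by (auto simp: defs)
  qed
  moreover have "(LINT y:Q'-Q|lebesgue. C1 * A') = (mQ' - mQ) * (C1 * A')"
  proof -
    have "emeasure lebesgue (Q' - Q) \<noteq> \<infinity>"
      using DS fin emeasure_mono[of "Q'-Q" Q' lebesgue] QS by (auto simp: top_unique)
    hence "(LINT y:Q'-Q|lebesgue. C1 * A') = measure lebesgue (Q'-Q) * (C1 * A')"
      using DS by (simp add: set_integral_const)
    also have "measure lebesgue (Q'-Q) = mQ' - mQ" using measure_Diff[OF fin QS(2,1) sub] by (simp add: defs)
    finally show ?thesis .
  qed
  moreover have "I' = A' * mQ'" using mQ'pos by (simp add: defs cube_avg_def)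
  moreover have "I = A * mQ" using mQ by (simp add: defs cube_avg_def)
  moreover have A'0: "0 \<le> A'"
  proof -
    have "0 \<le> I'" unfolding defs set_lebesgue_integral_def
      using nonneg by (intro integral_nonneg_AE) (auto simp: indicator_def)
    thus ?thesis using mQ'pos by (simp add: defs cube_avg_def)
  qed
  moreover have A0: "0 \<le> A"
  proof -
    have "0 \<le> I" unfolding defs set_lebesgue_integral_def
      using nonneg by (intro integral_nonneg_AE) (auto simp: indicator_def)
    thus ?thesis using mQ by (simp add: defs cube_avg_def)
  qed
  moreover have "2 * C1 * (mQ' - mQ) \<le> mQ'" using ratio by (simp add: defs)
  ultimately have "A' * mQ' \<le> A * mQ + (mQ' - mQ) * (C1 * A')" by linarith
  moreover have "(mQ' - mQ) * (C1 * A') \<le> A' * mQ' / 2"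
  proof -
    have "(mQ' - mQ) * (C1 * A') = A' * (C1 * (mQ' - mQ))" by (simp add: ac_simps)
    also have "\<dots> \<le> A' * (mQ' / 2)" using A'0 ratio by (intro mult_left_mono) (auto simp: defs)
    finally show ?thesis by simp
  qed
  moreover have "A * mQ \<le> A * mQ'" using A0 mle by (intro mult_left_mono)
  ultimately have "A' * mQ' \<le> (2 * A) * mQ'" by linarith
  thus ?thesis using mQ'pos by (simp add: defs)
qed


lemma cube_cover:
  fixes a :: "'a::euclidean_space" and D :: "'a set"
  assumes dense: "\<And>U. open U \<Longrightarrow> U \<noteq> {} \<Longrightarrow> \<exists>d\<in>D. d \<in> U"
    and s: "0 < s" and g1: "1 < \<gamma>"
  obtains d t where "d \<in> D" "t \<in> \<rat>" "0 < t"
    "cbox a (a + s *\<^sub>R One) \<subseteq> cbox d (d + t *\<^sub>R One)" "t ^ DIM('a) \<le> \<gamma> * s ^ DIM('a)"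
proof -
  let ?n = "DIM('a)"
  define r where "r = root ?n \<gamma>"
  have rn: "r ^ ?n = \<gamma>" using g1 by (simp add: r_def real_root_pow_pos2)
  have r0: "0 \<le> r" using g1 by (simp add: r_def)
  have r1: "1 < r"
  proof (rule ccontr)
    assume "\<not> 1 < r"
    hence "r ^ ?n \<le> 1" using r0 by (intro power_le_one) auto
    thus False using rn g1 by simp
  qed
  define g where "g = s * r - s"
  have g: "0 < g" using s r1 by (simp add: g_def)
  obtain t where t: "t \<in> \<rat>" "s + g/2 < t" "t < s + g"
    using Rats_dense_in_real[of "s + g/2" "s + g"] g by auto
  obtain d where d: "d \<in> D" "d \<in> ball (a - (g/4) *\<^sub>R One) (g/4)"
    using dense[of "ball (a - (g/4) *\<^sub>R One) (g/4)"] g by auto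
  have di: "a \<bullet> i - g/2 < d \<bullet> i \<and> d \<bullet> i < a \<bullet> i" if i: "i \<in> Basis" for i
  proof -
    have "\<bar>(d - (a - (g/4) *\<^sub>R One)) \<bullet> i\<bar> \<le> norm (d - (a - (g/4) *\<^sub>R One))"
      using i by (rule Basis_le_norm)
    also have "\<dots> < g/4" using d(2) by (simp add: dist_norm norm_minus_commute)
    finally have "\<bar>d \<bullet> i - (a \<bullet> i - g/4)\<bar> < g/4" using i by (simp add: inner_simps)
    thus ?thesis unfolding abs_less_iff by linarith
  qed
  show ?thesis
  proof (rule that[OF d(1) t(1)])
    show "0 < t" using t s g by linarith
    show "cbox a (a + s *\<^sub>R One) \<subseteq> cbox d (d + t *\<^sub>R One)"
    proof
      fix y assume "y \<in> cbox a (a + s *\<^sub>R One)"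
      hence y: "\<forall>i\<in>Basis. a \<bullet> i \<le> y \<bullet> i \<and> y \<bullet> i \<le> a \<bullet> i + s"
        by (simp add: mem_box inner_simps)
      have "\<forall>i\<in>Basis. d \<bullet> i \<le> y \<bullet> i \<and> y \<bullet> i \<le> d \<bullet> i + t"
      proof
        fix i :: 'a assume i: "i \<in> Basis"
        from y i di[OF i] t show "d \<bullet> i \<le> y \<bullet> i \<and> y \<bullet> i \<le> d \<bullet> i + t" by force
      qed
      thus "y \<in> cbox d (d + t *\<^sub>R One)" by (simp add: mem_box inner_simps)
    qed
    have t0: "0 \<le> t" using t s g by linarith
    have "t \<le> s * r" using t(3) by (simp add: g_def)
    hence "t ^ ?n \<le> (s * r) ^ ?n" using t0 by (intro power_mono) auto
    also have "\<dots> = \<gamma> * s ^ ?n" using rn by (simp add: power_mult_distrib)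
    finally show "t ^ ?n \<le> \<gamma> * s ^ ?n" .
  qed
qed

lemma cube_lmeas: "cbox a (b::'a::euclidean_space) \<in> sets lebesgue" "emeasure lebesgue (cbox a b) \<noteq> \<infinity>"
  using lmeasurable_cbox[of a b] by (auto simp: fmeasurable_def)

lemma ae_good:
  fixes v :: "'a::euclidean_space \<Rightarrow> real"
  assumes vint: "\<forall>Q. is_cube Q \<longrightarrow> set_integrable lebesgue Q v"
    and vnn: "AE y in lebesgue. 0 \<le> v y"
    and RH: "\<forall>Q. is_cube Q \<longrightarrow> (AE x in lebesgue. x \<in> Q \<longrightarrow> v x \<le> C1 * cube_avg v Q)"
    and C1: "1 \<le> C1"
  shows "AE x in lebesgue. \<forall>Q. is_cube Q \<and> x \<in> Q \<longrightarrow> v x \<le> 2 * C1 * cube_avg v Q"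
proof -
  obtain D :: "'a set" where D: "countable D" "\<And>U. open U \<Longrightarrow> U \<noteq> {} \<Longrightarrow> \<exists>d\<in>D. d \<in> U"
    using countable_dense_exists by blast
  define F where "F = (\<lambda>(d,t). cbox d (d + t *\<^sub>R (One::'a))) ` (D \<times> (\<rat> \<inter> {0<..}))"
  have cF: "countable F" unfolding F_def
    using D(1) countable_rat by (intro countable_image countable_SIGMA) auto
  have cubeF: "is_cube Q'" if "Q' \<in> F" for Q'
    using that unfolding F_def is_cube_def by (force simp: inner_simps)
  have "AE x in lebesgue. \<forall>Q'\<in>F. x \<in> Q' \<longrightarrow> v x \<le> C1 * cube_avg v Q'"
    using cF RH cubeF by (intro AE_ball_countable') auto
  thus ?thesis
  proof eventually_elim
    case (elim x)
    show ?case
    proof (intro allI impI, elim conjE)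
      fix Q assume Qc: "is_cube Q" and xQ: "x \<in> Q"
      obtain a s where as: "0 < s" "Q = cbox a (a + s *\<^sub>R One)" using cube_form[OF Qc] by blast
      define \<gamma> where "\<gamma> = 2*C1 / (2*C1 - 1)"
      have g1: "1 < \<gamma>" using C1 by (simp add: \<gamma>_def field_simps)
      obtain d t where dt: "d \<in> D" "t \<in> \<rat>" "0 < t"
        "cbox a (a + s *\<^sub>R One) \<subseteq> cbox d (d + t *\<^sub>R One)" "t ^ DIM('a) \<le> \<gamma> * s ^ DIM('a)"
        using cube_cover[OF D(2) as(1) g1] by blast
      define Q' where "Q' = cbox d (d + t *\<^sub>R One)"
      have Q'F: "Q' \<in> F" unfolding F_def Q'_def using dt by force
      have sub: "Q \<subseteq> Q'" using dt as by (simp add: Q'_def)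
      have vx: "v x \<le> C1 * cube_avg v Q'" using elim Q'F sub xQ by auto
      have mQ: "measure lebesgue Q = s ^ DIM('a)" unfolding as(2) by (rule cube_measure[OF as(1)])
      have mQ': "measure lebesgue Q' = t ^ DIM('a)" unfolding Q'_def by (rule cube_measure[OF dt(3)])
      have ratio: "2 * C1 * (measure lebesgue Q' - measure lebesgue Q) \<le> measure lebesgue Q'"
      proof -
        have "t ^ DIM('a) * (2*C1 - 1) \<le> \<gamma> * s ^ DIM('a) * (2*C1 - 1)"
          using dt(5) C1 by (intro mult_right_mono) auto
        also have "\<gamma> * s ^ DIM('a) * (2*C1 - 1) = 2*C1 * s ^ DIM('a)"
          using C1 by (simp add: \<gamma>_def field_simps)
        finally show ?thesis unfolding mQ mQ' by (simp add: algebra_simps)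
      qed
      have "cube_avg v Q' \<le> 2 * cube_avg v Q"
      proof (rule avg_compare[OF sub _ _ _ _ _ _ vnn _ ratio])
        show "Q \<in> sets lebesgue" "Q' \<in> sets lebesgue" "emeasure lebesgue Q' \<noteq> \<infinity>"
          using as cube_lmeas by (auto simp: Q'_def)
        show "0 < measure lebesgue Q" using mQ as by simp
        show "set_integrable lebesgue Q' v" using vint cubeF Q'F by auto
        show "AE y in lebesgue. y \<in> Q' \<longrightarrow> v y \<le> C1 * cube_avg v Q'" using RH cubeF Q'F by auto
        show "0 \<le> C1" using C1 by simp
      qed
      hence "C1 * cube_avg v Q' \<le> C1 * (2 * cube_avg v Q)" using C1 by (intro mult_left_mono) auto
      thus "v x \<le> 2 * C1 * cube_avg v Q" using vx by simp
    qed
  qed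
qed


lemma Psi_bound:
  assumes t: "0 < t" and p1: "1 < p" and ab: "conj_exp p - 1 \<le> conj_exp q - 1"
  shows "t powr (1 - conj_exp p) \<le> t powr (- conj_exp p) * Psi p q t"
proof (cases "t < 1")
  case True
  have "t powr (- conj_exp p) * Psi p q t = t powr (1 - conj_exp q)"
    using True t by (simp add: Psi_def powr_add[symmetric])
  moreover have "t powr (1 - conj_exp p) \<le> t powr (1 - conj_exp q)"
    using True t ab by (intro powr_mono') auto
  ultimately show ?thesis by simp
next
  case False
  have "t powr (- conj_exp p) * Psi p q t = 1"
    using False t by (simp add: Psi_def powr_add[symmetric])
  moreover have "conj_exp p > 1" using p1 by (simp add: conj_exp_def)
  hence "t powr (1 - conj_exp p) \<le> t powr 0"
    using False by (intro powr_mono) auto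
  ultimately show ?thesis using t by simp
qed

lemma avg_nonneg:
  assumes "AE y in lebesgue. 0 \<le> (v::'a::euclidean_space \<Rightarrow> real) y"
  shows "0 \<le> cube_avg v Q"
proof -
  have "0 \<le> (LINT y:Q|lebesgue. v y)" unfolding set_lebesgue_integral_def
    using assms by (intro integral_nonneg_AE) (auto simp: indicator_def)
  thus ?thesis by (simp add: cube_avg_def)
qed

lemma powr_inv_bound:
  assumes "0 \<le> (x::real)" "x powr g \<le> y" "0 < g"
  shows "x \<le> y powr (1/g)"
proof -
  have "x = (x powr g) powr (1/g)" using assms by (simp add: powr_powr)
  also have "\<dots> \<le> y powr (1/g)" using assms by (intro powr_mono2) auto
  finally show ?thesis .
qed

theorem lemma3p1:
  fixes m :: nat and \<epsilon> p q :: real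
    and u v :: "'a::euclidean_space \<Rightarrow> real"
  assumes "\<epsilon> > 0" and "1 < q" and "q < p"
    and "locally_integrable u" and "\<forall>x. 0 \<le> u x"
    and "RH_inf v" and "A_class q v"
  shows "\<exists>C>0. AE x in lebesgue.
    orlicz_max (Phi m \<epsilon>) (\<lambda>_. 1) (\<lambda>y. u y * v y powr (1 - conj_exp p)) x
    \<le> ennreal C * orlicz_max (Phi m \<epsilon>) (\<lambda>y. v y powr (1 - conj_exp q)) u x
       * ennreal (v x powr (- conj_exp p) * Psi p q (v x))"
proof -
  note e = assms(1) and q1 = assms(2) and qp = assms(3) and u = assms(5)
  have um: "u \<in> borel_measurable lebesgue" using assms(4) by (simp add: locally_integrable_def)
  have wv: "weight v" and wint: "\<forall>Q. is_cube Q \<longrightarrow> set_integrable lebesgue Q (\<lambda>x. v x powr (1 - conj_exp q))"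
    using assms(7) by (auto simp: A_class_def)
  obtain CA where CA: "\<forall>Q. is_cube Q \<longrightarrow>
      cube_avg v Q * (cube_avg (\<lambda>x. v x powr (1 - conj_exp q)) Q) powr (q - 1) \<le> CA"
    using assms(7) by (auto simp: A_class_def)
  obtain C0 where C0: "\<forall>Q. is_cube Q \<longrightarrow> (AE x in lebesgue. x \<in> Q \<longrightarrow> v x \<le> C0 * cube_avg v Q)"
    using assms(6) by (auto simp: RH_inf_def)
  have vm: "v \<in> borel_measurable lebesgue" and vloc: "\<forall>K. compact K \<longrightarrow> set_integrable lebesgue K v"
    and vpos: "AE x in lebesgue. 0 < v x"
    using wv by (auto simp: weight_def locally_integrable_def)
  have vnn: "AE x in lebesgue. 0 \<le> v x" using vpos by eventually_elim auto
  have cube_int: "set_integrable lebesgue Q v" if Qc0: "is_cube Q" for Q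
  proof -
    obtain a s where "Q = cbox a (a + s *\<^sub>R One)" using cube_form[OF Qc0] by blast
    thus ?thesis using vloc compact_cbox by auto
  qed
  define C1 where "C1 = max C0 1"
  have C1: "1 \<le> C1" by (simp add: C1_def)
  have RH: "\<forall>Q. is_cube Q \<longrightarrow> (AE x in lebesgue. x \<in> Q \<longrightarrow> v x \<le> C1 * cube_avg v Q)"
  proof (intro allI impI)
    fix Q :: "'a set" assume Q: "is_cube Q"
    have "C0 * cube_avg v Q \<le> C1 * cube_avg v Q"
      using avg_nonneg[OF vnn] by (intro mult_right_mono) (auto simp: C1_def)
    moreover have "AE x in lebesgue. x \<in> Q \<longrightarrow> v x \<le> C0 * cube_avg v Q" using C0 Q by auto
    ultimately show "AE x in lebesgue. x \<in> Q \<longrightarrow> v x \<le> C1 * cube_avg v Q"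
      by (auto elim!: eventually_mono)
  qed
  define \<alpha> where "\<alpha> = conj_exp p - 1"
  define \<beta> where "\<beta> = conj_exp q - 1"
  have \<alpha>: "\<alpha> = 1/(p-1)" using qp q1 by (simp add: \<alpha>_def conj_exp_def field_simps)
  have \<beta>: "\<beta> = 1/(q-1)" using q1 by (simp add: \<beta>_def conj_exp_def field_simps)
  have a0: "0 < \<alpha>" using \<alpha> q1 qp by simp
  have ab: "\<alpha> < \<beta>" using \<alpha> \<beta> q1 qp by (simp add: frac_less2)
  have ep: "1 - conj_exp p = -\<alpha>" and eq: "1 - conj_exp q = -\<beta>" by (simp_all add: \<alpha>_def \<beta>_def)
  define CA' where "CA' = max CA 1"
  define C2 where "C2 = CA' powr \<beta>"
  have CA': "0 < CA'" by (simp add: CA'_def)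
  have C2: "0 < C2" using CA' by (simp add: C2_def)
  obtain c where c: "1 \<le> c" and scal0: "\<forall>a. 0 < a \<and> a \<le> C1 \<longrightarrow>
      Phi m \<epsilon> (a powr (-\<alpha>) / c) \<le> a powr (-(\<alpha>+(\<beta>-\<alpha>))) / C2"
    using Phi_scalar[OF a0 _ e C1 C2, of "\<beta>-\<alpha>" m] ab by auto
  have scal: "\<forall>a. 0 < a \<and> a \<le> C1 \<longrightarrow> Phi m \<epsilon> (a powr (-\<alpha>) / c) \<le> a powr (-\<beta>) / C2"
    using scal0 by simp
  have cube_est: "0 < cube_avg v Q \<and>
      lux_norm (Phi m \<epsilon>) (\<lambda>_. 1) Q (\<lambda>y. u y * v y powr (-\<alpha>))
     \<le> ennreal (c * cube_avg v Q powr (-\<alpha>)) * lux_norm (Phi m \<epsilon>) (\<lambda>y. v y powr (-\<beta>)) Q u"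
    if Qc: "is_cube Q" for Q
  proof -
    obtain a s where as: "0 < s" "Q = cbox a (a + s *\<^sub>R One)" using cube_form[OF Qc] by blast
    have QS: "Q \<in> sets lebesgue" "emeasure lebesgue Q \<noteq> \<infinity>" using as cube_lmeas by auto
    have mQ: "0 < measure lebesgue Q" unfolding as(2) cube_measure[OF as(1)] using as by simp
    define A where "A = cube_avg v Q"
    have vQ: "AE y in lebesgue. y \<in> Q \<longrightarrow> 0 < v y \<and> v y \<le> C1 * A"
      using RH Qc vpos by (auto simp: A_def elim: eventually_mono)
    have A: "0 < A"
    proof (rule ccontr)
      assume "\<not> 0 < A"
      hence "AE y in lebesgue. y \<notin> Q" using vQ C1
        by (auto elim!: eventually_mono) (smt (verit) mult_nonneg_nonpos)
      hence "emeasure lebesgue Q = 0" using QS(1) by (subst (asm) AE_iff_measurable[of Q]) auto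
      thus False using mQ QS(2) by (simp add: measure_def)
    qed
    define W where "W = cube_avg (\<lambda>x. v x powr (1 - conj_exp q)) Q"
    have W0: "0 \<le> W" unfolding W_def by (rule avg_nonneg) auto
    have "A * W powr (q - 1) \<le> CA'" using CA Qc by (auto simp: A_def W_def CA'_def)
    hence "W powr (q-1) \<le> CA' / A" using A by (simp add: field_simps)
    hence "W \<le> (CA' / A) powr (1/(q-1))" using W0 q1 by (intro powr_inv_bound) auto
    also have "\<dots> = C2 * A powr (-\<beta>)" using CA' A
      by (simp add: C2_def \<beta> powr_divide powr_minus_divide)
    finally have Wb: "W \<le> C2 * A powr (-\<beta>)" .
    have wbound: "(LINT y:Q|lebesgue. v y powr (-\<beta>)) \<le> C2 * A powr (-\<beta>) * measure lebesgue Q"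
    proof -
      have "(LINT y:Q|lebesgue. v y powr (-\<beta>)) = W * measure lebesgue Q"
        using mQ by (simp add: W_def cube_avg_def eq)
      thus ?thesis using Wb mQ by (simp add: mult_right_mono)
    qed
    have "lux_norm (Phi m \<epsilon>) (\<lambda>_. 1) Q (\<lambda>y. u y * v y powr (-\<alpha>))
     \<le> ennreal (c * A powr (-\<alpha>)) * lux_norm (Phi m \<epsilon>) (\<lambda>y. v y powr (-\<beta>)) Q u"
    proof (rule cube_estimate[OF QS(1) mQ _ u um vm vQ A _ wbound C2 _ _ scal])
      show "emeasure lebesgue Q < \<infinity>" using QS(2) by (simp add: less_top)
      show "set_integrable lebesgue Q (\<lambda>y. v y powr (- \<beta>))" using wint Qc eq by auto
      show "0 \<le> \<epsilon>" "0 < c" using e c by auto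
    qed
    thus ?thesis using A by (simp add: A_def)
  qed
  have good: "AE x in lebesgue. \<forall>Q. is_cube Q \<and> x \<in> Q \<longrightarrow> v x \<le> 2 * C1 * cube_avg v Q"
    using ae_good[OF _ vnn RH C1] cube_int by auto
  define K0 where "K0 = c * (2 * C1) powr \<alpha>"
  have K0: "0 < K0" using c C1 by (simp add: K0_def)
  show ?thesis
  proof (intro exI[of _ K0] conjI K0)
    show "AE x in lebesgue.
      orlicz_max (Phi m \<epsilon>) (\<lambda>_. 1) (\<lambda>y. u y * v y powr (1 - conj_exp p)) x
      \<le> ennreal K0 * orlicz_max (Phi m \<epsilon>) (\<lambda>y. v y powr (1 - conj_exp q)) u x
        * ennreal (v x powr (- conj_exp p) * Psi p q (v x))"
      using good vpos
    proof eventually_elim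
      case (elim x)
      let ?R = "orlicz_max (Phi m \<epsilon>) (\<lambda>y. v y powr (-\<beta>)) u x"
      have vx: "0 < v x" using elim by simp
      have "lux_norm (Phi m \<epsilon>) (\<lambda>_. 1) Q (\<lambda>y. u y * v y powr (-\<alpha>)) \<le> ennreal (K0 * v x powr (-\<alpha>)) * ?R"
        if Q: "Q \<in> {Q. is_cube Q \<and> x \<in> Q}" for Q
      proof -
        have Qc: "is_cube Q" and xQ: "x \<in> Q" using Q by auto
        have A: "0 < cube_avg v Q" and est: "lux_norm (Phi m \<epsilon>) (\<lambda>_. 1) Q (\<lambda>y. u y * v y powr (-\<alpha>))
          \<le> ennreal (c * cube_avg v Q powr (-\<alpha>)) * lux_norm (Phi m \<epsilon>) (\<lambda>y. v y powr (-\<beta>)) Q u"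
          using cube_est[OF Qc] by auto
        have "v x \<le> 2 * C1 * cube_avg v Q" using elim Qc xQ by blast
        hence "v x / (2*C1) \<le> cube_avg v Q" using C1 by (subst pos_divide_le_eq) (auto simp: mult_ac)
        hence "cube_avg v Q powr (-\<alpha>) \<le> (v x / (2*C1)) powr (-\<alpha>)"
          using vx C1 a0 by (intro powr_mono2') auto
        also have "\<dots> = (2*C1) powr \<alpha> * v x powr (-\<alpha>)"
        proof -
          have "(v x / (2*C1)) powr (-\<alpha>) = v x powr (-\<alpha>) / (2*C1) powr (-\<alpha>)"
            using vx C1 by (intro powr_divide; simp)
          also have "\<dots> = v x powr (-\<alpha>) * (2*C1) powr \<alpha>"
            by (simp add: powr_minus divide_inverse)
          finally show ?thesis by (simp only: mult_ac)
        qed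
        finally have "c * cube_avg v Q powr (-\<alpha>) \<le> K0 * v x powr (-\<alpha>)"
          using c by (simp add: K0_def mult.assoc)
        hence "ennreal (c * cube_avg v Q powr (-\<alpha>)) \<le> ennreal (K0 * v x powr (-\<alpha>))"
          by (rule ennreal_leI)
        moreover have "lux_norm (Phi m \<epsilon>) (\<lambda>y. v y powr (-\<beta>)) Q u \<le> ?R"
          unfolding orlicz_max_def using Q by (rule SUP_upper)
        ultimately have "ennreal (c * cube_avg v Q powr (-\<alpha>)) * lux_norm (Phi m \<epsilon>) (\<lambda>y. v y powr (-\<beta>)) Q u
            \<le> ennreal (K0 * v x powr (-\<alpha>)) * ?R"
          by (intro mult_mono) auto
        thus ?thesis using est by (rule order.trans[rotated])
      qed
      hence L: "orlicz_max (Phi m \<epsilon>) (\<lambda>_. 1) (\<lambda>y. u y * v y powr (-\<alpha>)) x \<le> ennreal (K0 * v x powr (-\<alpha>)) * ?R"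
        unfolding orlicz_max_def[of _ "\<lambda>_. 1"] by (rule SUP_least)
      have "v x powr (-\<alpha>) \<le> v x powr (- conj_exp p) * Psi p q (v x)"
        using Psi_bound[OF vx, of p q] ab qp q1 by (simp add: \<alpha>_def \<beta>_def)
      hence "K0 * v x powr (-\<alpha>) \<le> K0 * (v x powr (- conj_exp p) * Psi p q (v x))"
        using K0 by (intro mult_left_mono) auto
      hence "ennreal (K0 * v x powr (-\<alpha>)) \<le> ennreal (K0 * (v x powr (- conj_exp p) * Psi p q (v x)))"
        by (rule ennreal_leI)
      also have "\<dots> = ennreal K0 * ennreal (v x powr (- conj_exp p) * Psi p q (v x))"
        using K0 by (intro ennreal_mult'') (simp_all add: Psi_def)
      finally have "ennreal (K0 * v x powr (-\<alpha>)) \<le> ennreal K0 * ennreal (v x powr (- conj_exp p) * Psi p q (v x))" .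
      hence "ennreal (K0 * v x powr (-\<alpha>)) * ?R \<le> ennreal K0 * ennreal (v x powr (- conj_exp p) * Psi p q (v x)) * ?R"
        by (rule mult_right_mono) auto
      also have "\<dots> = ennreal K0 * ?R * ennreal (v x powr (- conj_exp p) * Psi p q (v x))"
        by (simp only: ac_simps)
      finally show ?case using L unfolding ep eq by (rule order.trans[rotated])
    qed
  qed
qed

end
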